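(* Let $n\ge 2$. For $T\in\mathrm{SYT}^{+k}((b,b))$ with $b\ge1$, $k\ge0$, $2b+k=n$, define the word $\alpha(T)$ as follows. The largest entry $n$ lies in the bottom-right cell; delete it. For $j=1,\dots,b$ let $A_j$ be the set in the top cell of column $j$ and $B_j$ the set in the bottom cell of column $j$ (with $n$ removed when $j=b$; $B_b$ may become empty). Then $\alpha(T)$ is the concatenation, for $j=1,\dots,b$ in order, of: the elements of $A_j\setminus\{\max A_j\}$ in increasing order, followed by the elements of $B_j$ in increasing order, followed by $\max A_j$. Then: (1) $\alpha$ is a bijection from $\bigsqcup_{b\ge1,k\ge0,\,2b+k=n}\mathrm{SYT}^{+k}((b,b))$ onto the set of $321$-avoiding permutations of $[n-1]$; (2) the set of entries in the top row of $T$ equals the set of values of the right-to-left minima of $\alpha(T)$; (3) if $T$ has $b$ columns, then $\alpha(T)$ has exactly $b-1$ inner valleys.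
   Context: $\mathrm{SYT}^{+k}(\lambda)$: for a partition $\lambda$ of $N$ and $k\ge 0$, the set of fillings $S$ of the cells of the Ferrers diagram of $\lambda$ by nonempty sets of positive integers forming a set partition of $[N+k]$, such that $\max S(u)<\min S(v)$ whenever $u\ne v$ and $u$ is weakly northwest of $v$. A permutation $\pi=\pi_1\cdots\pi_m$ is $321$-avoiding if there are no $i<j<l$ with $\pi_i>\pi_j>\pi_l$. $\pi_i$ is a right-to-left minimum if $\pi_i<\pi_j$ for all $j>i$. An inner valley of $\pi$ is an entry $\pi_j$ with $1<j<m$ and $\pi_{j-1}>\pi_j<\pi_{j+1}$. *)

theory Defs
  imports Main
begin

text \<open>A partition is a list of row lengths (top row first). Cells are pairs (row, column),
  0-indexed, row 0 being the top row (English convention).\<close>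

definition cells :: "nat list \<Rightarrow> (nat \<times> nat) set" where
  "cells lam = {(i, j). i < length lam \<and> j < lam ! i}"

definition SYT_plus :: "nat list \<Rightarrow> nat \<Rightarrow> (nat \<Rightarrow> nat \<Rightarrow> nat set) set" where
  "SYT_plus lam k = {S.
     (\<forall>i j. (i, j) \<notin> cells lam \<longrightarrow> S i j = {}) \<and>
     (\<forall>(i, j) \<in> cells lam. S i j \<noteq> {}) \<and>
     (\<forall>(i, j) \<in> cells lam. \<forall>(i', j') \<in> cells lam. (i, j) \<noteq> (i', j') \<longrightarrow> S i j \<inter> S i' j' = {}) \<and>
     (\<Union>(i, j) \<in> cells lam. S i j) = {1..sum_list lam + k} \<and>
     (\<forall>(i, j) \<in> cells lam. \<forall>(i', j') \<in> cells lam.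
        (i, j) \<noteq> (i', j') \<and> i \<le> i' \<and> j \<le> j' \<longrightarrow> Max (S i j) < Min (S i' j')) }"

definition alpha_word :: "nat \<Rightarrow> nat \<Rightarrow> (nat \<Rightarrow> nat \<Rightarrow> nat set) \<Rightarrow> nat list" where
  "alpha_word n b T = concat (map (\<lambda>j.
     let A = T 0 j; B = (if j = b - 1 then T 1 j - {n} else T 1 j) in
       sorted_list_of_set (A - {Max A}) @ sorted_list_of_set B @ [Max A]) [0..<b])"

definition avoids321 :: "nat list \<Rightarrow> bool" where
  "avoids321 xs = (\<not> (\<exists>i j l. i < j \<and> j < l \<and> l < length xs \<and> xs ! i > xs ! j \<and> xs ! j > xs ! l))"

definition rl_min_values :: "nat list \<Rightarrow> nat set" where
  "rl_min_values xs = {xs ! i | i. i < length xs \<and> (\<forall>j. i < j \<and> j < length xs \<longrightarrow> xs ! i < xs ! j)}"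

definition inner_valleys :: "nat list \<Rightarrow> nat" where
  "inner_valleys xs = card {j. 0 < j \<and> j + 1 < length xs \<and> xs ! (j - 1) > xs ! j \<and> xs ! j < xs ! (j + 1)}"

definition perms321 :: "nat \<Rightarrow> nat list set" where
  "perms321 m = {xs. distinct xs \<and> set xs = {1..m} \<and> avoids321 xs}"

text \<open>Disjoint union over b \<ge> 1, k \<ge> 0 with 2b + k = n, tagged by b (k = n - 2b).\<close>
definition SYT_two_rows :: "nat \<Rightarrow> (nat \<times> (nat \<Rightarrow> nat \<Rightarrow> nat set)) set" where
  "SYT_two_rows n = {(b, T). 1 \<le> b \<and> 2 * b \<le> n \<and> T \<in> SYT_plus [b, b] (n - 2 * b)}"

end

theory Submission
  imports Defs
begin

definition before :: "'a list \<Rightarrow> 'a \<Rightarrow> 'a \<Rightarrow> bool" where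
  "before xs x y \<longleftrightarrow> (\<exists>i j. i < j \<and> j < length xs \<and> xs!i = x \<and> xs!j = y)"

lemma before_set: "before xs x y \<Longrightarrow> x \<in> set xs \<and> y \<in> set xs"
  unfolding before_def by auto

lemma before_append:
  "before (xs @ ys) x y \<longleftrightarrow> before xs x y \<or> before ys x y \<or> (x \<in> set xs \<and> y \<in> set ys)"
proof
  assume "before (xs @ ys) x y"
  then obtain i j where ij: "i < j" "j < length (xs@ys)" "(xs@ys)!i = x" "(xs@ys)!j = y"
    unfolding before_def by blast
  show "before xs x y \<or> before ys x y \<or> (x \<in> set xs \<and> y \<in> set ys)"
  proof (cases "j < length xs")
    case True
    then have "before xs x y" using ij unfolding before_def
      by (intro exI[of _ i] exI[of _ j]) (auto simp: nth_append)
    then show ?thesis by blast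
  next
    case False
    show ?thesis
    proof (cases "i < length xs")
      case True
      then show ?thesis using ij False by (auto simp: nth_append)
    next
      case F2: False
      have "before ys x y" unfolding before_def
        using ij False F2 by (intro exI[of _ "i - length xs"] exI[of _ "j - length xs"]) (auto simp: nth_append)
      then show ?thesis by blast
    qed
  qed
next
  assume "before xs x y \<or> before ys x y \<or> (x \<in> set xs \<and> y \<in> set ys)"
  then show "before (xs @ ys) x y"
  proof (elim disjE)
    assume "before xs x y"
    then obtain i j where "i < j" "j < length xs" "xs!i = x" "xs!j = y" unfolding before_def by blast
    then show ?thesis unfolding before_def by (intro exI[of _ i] exI[of _ j]) (auto simp: nth_append)
  next
    assume "before ys x y"
    then obtain i j where "i < j" "j < length ys" "ys!i = x" "ys!j = y" unfolding before_def by blast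
    then show ?thesis unfolding before_def
      by (intro exI[of _ "i + length xs"] exI[of _ "j + length xs"]) (auto simp: nth_append)
  next
    assume "x \<in> set xs \<and> y \<in> set ys"
    then obtain i j where "i < length xs" "j < length ys" "xs!i = x" "ys!j = y" by (auto simp: in_set_conv_nth)
    then show ?thesis unfolding before_def
      by (intro exI[of _ "i"] exI[of _ "j + length xs"]) (auto simp: nth_append)
  qed
qed

lemma before_single[simp]: "\<not> before [a] x y"
  unfolding before_def by auto

lemma before_Cons: "before (a # xs) x y \<longleftrightarrow> (x = a \<and> y \<in> set xs) \<or> before xs x y"
  using before_append[of "[a]" xs x y] by auto

lemma before_sorted_wrt:
  assumes "sorted_wrt (<) xs"
  shows "before xs x y \<longleftrightarrow> x \<in> set xs \<and> y \<in> set xs \<and> (x::'a::linorder) < y"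
proof
  assume "before xs x y"
  then show "x \<in> set xs \<and> y \<in> set xs \<and> x < y"
    using assms unfolding before_def by (auto simp: sorted_wrt_iff_nth_less)
next
  assume a: "x \<in> set xs \<and> y \<in> set xs \<and> x < y"
  then obtain i j where ij: "i < length xs" "j < length xs" "xs!i = x" "xs!j = y" by (auto simp: in_set_conv_nth)
  have "\<not> j < i" using assms ij a by (metis less_asym sorted_wrt_iff_nth_less)
  moreover have "i \<noteq> j" using ij a by auto
  ultimately show "before xs x y" unfolding before_def using ij by (intro exI[of _ i] exI[of _ j]) auto
qed

lemma before_sorted_list:
  "finite S \<Longrightarrow> before (sorted_list_of_set S) x y \<longleftrightarrow> x \<in> S \<and> y \<in> S \<and> (x::'a::linorder) < y"
  by (subst before_sorted_wrt) (auto simp: sorted_list_of_set.strict_sorted_key_list_of_set)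

lemma before_irrefl: "distinct xs \<Longrightarrow> \<not> before xs x x"
  unfolding before_def by (auto simp: nth_eq_iff_index_eq)

lemma before_idx: "distinct xs \<Longrightarrow> i < length xs \<Longrightarrow> j < length xs \<Longrightarrow>
   before xs (xs!i) (xs!j) \<longleftrightarrow> i < j"
  unfolding before_def by (auto simp: nth_eq_iff_index_eq)

lemma before_trans: "distinct xs \<Longrightarrow> before xs x y \<Longrightarrow> before xs y z \<Longrightarrow> before xs x z"
  unfolding before_def by (metis nth_eq_iff_index_eq order.strict_trans order.strict_trans2 order.strict_trans1)

lemma before_total: "distinct xs \<Longrightarrow> x \<in> set xs \<Longrightarrow> y \<in> set xs \<Longrightarrow> x \<noteq> y \<Longrightarrow> before xs x y \<or> before xs y x"
  unfolding before_def by (auto simp: in_set_conv_nth) (metis linorder_neqE_nat)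

lemma before_asym: "distinct xs \<Longrightarrow> before xs x y \<Longrightarrow> \<not> before xs y x"
  using before_trans before_irrefl by fast

lemma distinct_eq_by_before:
  assumes "distinct xs" "distinct ys" "set xs = set ys" "\<And>x y. before xs x y \<Longrightarrow> before ys x y"
  shows "xs = ys"
  using assms
proof (induction xs arbitrary: ys)
  case Nil then show ?case by simp
next
  case (Cons x xs)
  have "ys \<noteq> []" using Cons.prems(3) by auto
  then obtain y ys' where ys: "ys = y # ys'" by (cases ys) auto
  have "y = x"
  proof (rule ccontr)
    assume yx: "y \<noteq> x"
    have "y \<in> set (x#xs)" using Cons.prems(3) ys by simp
    then have "y \<in> set xs" using yx by simp
    then have "before (x # xs) x y" by (simp add: before_Cons)
    then have "before (y#ys') x y" using Cons.prems(4) ys by blast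
    then have "before ys' x y" using yx by (simp add: before_Cons)
    then have "y \<in> set ys'" by (simp add: before_set)
    then show False using ys Cons.prems(2) by simp
  qed
  have bb: "before ys' u v" if "before xs u v" for u v
  proof -
    have "before (x#xs) u v" using that by (simp add: before_Cons)
    then have "before (x#ys') u v" using Cons.prems(4) ys \<open>y = x\<close> by blast
    moreover have "u \<noteq> x" using that Cons.prems(1) before_set by fastforce
    ultimately show "before ys' u v" by (simp add: before_Cons)
  qed
  have d: "distinct xs" "distinct ys'" using Cons.prems(1,2) ys by auto
  have eq: "set (x#xs) = set (x#ys')" using Cons.prems(3) ys \<open>y = x\<close> by simp
  have xn: "x \<notin> set xs" "x \<notin> set ys'" using Cons.prems(1,2) ys \<open>y = x\<close> by auto
  have "set xs = set (x#xs) - {x}" using xn by auto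
  also have "\<dots> = set (x#ys') - {x}" using eq by simp
  also have "\<dots> = set ys'" using xn by auto
  finally have st: "set xs = set ys'" .
  have "xs = ys'" by (rule Cons.IH[OF d st bb])
  then show ?case using ys \<open>y = x\<close> by simp
qed

lemma before_concat_blocks:
  assumes "\<And>j. j < c \<Longrightarrow> distinct (f j)"
    and "\<And>j j'. j < c \<Longrightarrow> j' < c \<Longrightarrow> j \<noteq> j' \<Longrightarrow> set (f j) \<inter> set (f j') = {}"
  shows "distinct (concat (map f [0..<c])) \<and>
    (\<forall>j j' x y. j < c \<longrightarrow> j' < c \<longrightarrow> x \<in> set (f j) \<longrightarrow> y \<in> set (f j') \<longrightarrow>
       (before (concat (map f [0..<c])) x y \<longleftrightarrow> j < j' \<or> (j = j' \<and> before (f j) x y)))"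
  using assms
proof (induction c)
  case 0 then show ?case by simp
next
  case (Suc c)
  have IH: "distinct (concat (map f [0..<c])) \<and>
    (\<forall>j j' x y. j < c \<longrightarrow> j' < c \<longrightarrow> x \<in> set (f j) \<longrightarrow> y \<in> set (f j') \<longrightarrow>
       (before (concat (map f [0..<c])) x y \<longleftrightarrow> j < j' \<or> (j = j' \<and> before (f j) x y)))"
    using Suc.IH Suc.prems by auto
  have disjc: "set (concat (map f [0..<c])) \<inter> set (f c) = {}"
  proof -
    { fix z j assume "j < c" "z \<in> set (f j)" "z \<in> set (f c)"
      then have False using Suc.prems(2)[of j c] by auto }
    then show ?thesis by fastforce
  qed
  have eq: "concat (map f [0..<Suc c]) = concat (map f [0..<c]) @ f c" by simp
  show ?case unfolding eq
  proof (intro conjI allI impI)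
    show "distinct (concat (map f [0..<c]) @ f c)" using IH disjc Suc.prems(1) by auto
    fix j j' x y assume jj: "j < Suc c" "j' < Suc c" "x \<in> set (f j)" "y \<in> set (f j')"
    have xin: "j < c \<Longrightarrow> x \<in> set (concat (map f [0..<c]))" using jj by auto
    have yin: "j' < c \<Longrightarrow> y \<in> set (concat (map f [0..<c]))" using jj by auto
    have xnot: "j = c \<Longrightarrow> x \<notin> set (concat (map f [0..<c]))" using jj disjc by auto
    have ynot: "j' = c \<Longrightarrow> y \<notin> set (concat (map f [0..<c]))" using jj disjc by auto
    have xnot2: "j < c \<Longrightarrow> x \<notin> set (f c)" using jj disjc xin by blast
    have ynot2: "j' < c \<Longrightarrow> y \<notin> set (f c)" using jj disjc yin by blast
    show "before (concat (map f [0..<c]) @ f c) x y \<longleftrightarrow> j < j' \<or> (j = j' \<and> before (f j) x y)"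
    proof (cases "j < c"; cases "j' < c")
      assume a: "j < c" "j' < c" then show ?thesis using jj xnot2 ynot2 IH[THEN conjunct2, rule_format, OF a jj(3) jj(4)]
        by (auto simp: before_append dest: before_set)
    next
      assume "j < c" "\<not> j' < c" then have "j' = c" "j < j'" using jj by auto
      then show ?thesis using jj xin ynot ynot2 by (auto simp: before_append dest: before_set)
    next
      assume "\<not> j < c" "j' < c" then have "j = c" "\<not> j < j'" "j \<noteq> j'" using jj by auto
      then show ?thesis using jj xnot yin ynot2 by (auto simp: before_append dest: before_set)
    next
      assume "\<not> j < c" "\<not> j' < c" 
      then have "j = c" "j' = c" using jj by auto
      then show ?thesis using jj xnot ynot by (auto simp: before_append dest: before_set)
    qed
  qed
qed

definition rlm :: "nat list \<Rightarrow> nat \<Rightarrow> bool" where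
  "rlm w x \<longleftrightarrow> x \<in> rl_min_values w"

lemma rlm_nth:
  assumes "distinct w" "i < length w"
  shows "rlm w (w!i) \<longleftrightarrow> (\<forall>j. i < j \<and> j < length w \<longrightarrow> w!i < w!j)"
proof
  assume "rlm w (w!i)"
  then obtain i' where i': "w!i = w!i'" "i' < length w" "\<forall>j. i' < j \<and> j < length w \<longrightarrow> w!i' < w!j"
    unfolding rlm_def rl_min_values_def by blast
  then have "i' = i" using assms by (simp add: nth_eq_iff_index_eq)
  then show "\<forall>j. i < j \<and> j < length w \<longrightarrow> w!i < w!j" using i' by simp
next
  assume "\<forall>j. i < j \<and> j < length w \<longrightarrow> w!i < w!j"
  then show "rlm w (w!i)" unfolding rlm_def rl_min_values_def using assms by blast
qed

lemma not_rlm_nth: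
  assumes "distinct w" "i < length w" "\<not> rlm w (w!i)"
  shows "\<exists>l. i < l \<and> l < length w \<and> w!l < w!i"
proof -
  obtain l where l: "i < l" "l < length w" "\<not> w!i < w!l" using rlm_nth[OF assms(1,2)] assms(3) by auto
  then have "w!l \<noteq> w!i" using assms(1,2) by (simp add: nth_eq_iff_index_eq)
  then show ?thesis using l by (intro exI[of _ l]) auto
qed

lemma rlm_in_set: "rlm w x \<Longrightarrow> x \<in> set w"
  unfolding rlm_def rl_min_values_def by auto

lemma rlm_iff:
  assumes "distinct w" "x \<in> set w"
  shows "rlm w x \<longleftrightarrow> (\<forall>y. before w x y \<longrightarrow> x < y)"
proof -
  obtain i where i: "i < length w" "x = w!i" using assms by (auto simp: in_set_conv_nth)
  have "(\<forall>y. before w x y \<longrightarrow> x < y) \<longleftrightarrow> (\<forall>j. i < j \<and> j < length w \<longrightarrow> w!i < w!j)"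
  proof
    assume h: "\<forall>y. before w x y \<longrightarrow> x < y"
    show "\<forall>j. i < j \<and> j < length w \<longrightarrow> w!i < w!j"
    proof (intro allI impI)
      fix j assume "i < j \<and> j < length w"
      then have "before w x (w!j)" using i unfolding before_def by blast
      then show "w!i < w!j" using h i by blast
    qed
  next
    assume h: "\<forall>j. i < j \<and> j < length w \<longrightarrow> w!i < w!j"
    show "\<forall>y. before w x y \<longrightarrow> x < y"
    proof (intro allI impI)
      fix y assume "before w x y"
      then obtain i' j where "i' < j" "j < length w" "w!i' = x" "w!j = y" unfolding before_def by blast
      moreover then have "i' = i" using i assms by (simp add: nth_eq_iff_index_eq)
      ultimately show "x < y" using h i by blast
    qed
  qed
  then show ?thesis using rlm_nth[OF assms(1) i(1)] i by simp
qed

lemma rlm_before: "distinct w \<Longrightarrow> rlm w x \<Longrightarrow> before w x y \<Longrightarrow> x < y"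
  using rlm_iff rlm_in_set by blast

lemma not_rlm_before: "distinct w \<Longrightarrow> x \<in> set w \<Longrightarrow> \<not> rlm w x \<Longrightarrow> \<exists>y. before w x y \<and> y < x"
proof -
  assume a: "distinct w" "x \<in> set w" "\<not> rlm w x"
  then obtain y where "before w x y" "\<not> x < y" using rlm_iff[of w x] by blast
  moreover then have "x \<noteq> y" using a before_irrefl by metis
  ultimately show ?thesis by (intro exI[of _ y]) auto
qed

lemma G321:
  assumes "distinct w" "\<And>x y. before w x y \<Longrightarrow> \<not> rlm w x \<Longrightarrow> \<not> rlm w y \<Longrightarrow> x < y"
  shows "avoids321 w"
  unfolding avoids321_def
proof
  assume "\<exists>i j l. i < j \<and> j < l \<and> l < length w \<and> w!i > w!j \<and> w!j > w!l"
  then obtain i j l where h: "i < j" "j < l" "l < length w" "w!i > w!j" "w!j > w!l" by blast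
  have "\<not> rlm w (w!j)" using rlm_nth[OF assms(1), of j] h by auto
  moreover have "\<not> rlm w (w!i)" using rlm_nth[OF assms(1), of i] h by auto
  moreover have "before w (w!i) (w!j)" using h unfolding before_def by (intro exI[of _ i] exI[of _ j]) auto
  ultimately have "w!i < w!j" using assms(2) by blast
  then show False using h by simp
qed

lemma G321':
  assumes "avoids321 w" "distinct w" "before w x y" "\<not> rlm w x" "\<not> rlm w y"
  shows "x < y"
proof (rule ccontr)
  assume "\<not> x < y"
  moreover have "x \<noteq> y" using assms before_irrefl by metis
  ultimately have xy: "x > y" by simp
  obtain i j where ij: "i < j" "j < length w" "w!i = x" "w!j = y" using assms(3) unfolding before_def by blast
  obtain l where l: "j < l" "l < length w" "w!l < w!j"
    using not_rlm_nth[OF assms(2) ij(2)] assms(5) ij by auto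
  show False using assms(1) unfolding avoids321_def using ij l xy by blast
qed

definition cutpos :: "nat list \<Rightarrow> nat \<Rightarrow> bool" where
  "cutpos w p \<longleftrightarrow> p < length w \<and> rlm w (w!p) \<and> (p = length w - 1 \<or> (0 < p \<and> \<not> rlm w (w!(p-1))))"

lemma valleys_eq:
  assumes "distinct w" "avoids321 w"
  shows "{j. 0 < j \<and> j + 1 < length w \<and> w ! (j - 1) > w ! j \<and> w ! j < w ! (j + 1)}
       = {p. cutpos w p \<and> p + 1 < length w}"
proof (intro set_eqI iffI)
  fix p assume "p \<in> {j. 0 < j \<and> j + 1 < length w \<and> w ! (j - 1) > w ! j \<and> w ! j < w ! (j + 1)}"
  then have p: "0 < p" "p + 1 < length w" "w!(p-1) > w!p" "w!p < w!(p+1)" by auto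
  have r: "rlm w (w!p)"
  proof (rule ccontr)
    assume "\<not> rlm w (w!p)"
    then obtain l where "p < l" "l < length w" "w!l < w!p" using not_rlm_nth[OF assms(1), of p] p by auto
    then show False using assms(2) p unfolding avoids321_def
      by (metis Suc_pred' diff_less less_numeral_extra(1) less_trans_Suc)
  qed
  have "\<not> rlm w (w!(p-1))" using rlm_nth[OF assms(1), of "p-1"] p by auto
  then show "p \<in> {p. cutpos w p \<and> p + 1 < length w}" unfolding cutpos_def using p r by auto
next
  fix p assume "p \<in> {p. cutpos w p \<and> p + 1 < length w}"
  then have p: "p < length w" "rlm w (w!p)" "0 < p" "\<not> rlm w (w!(p-1))" "p + 1 < length w"
    unfolding cutpos_def by auto
  have a: "w!p < w!(p+1)" using rlm_nth[OF assms(1), of p] p by auto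
  obtain l where l: "p - 1 < l" "l < length w" "w!l < w!(p-1)" using not_rlm_nth[OF assms(1), of "p-1"] p by (meson less_imp_diff_less)
  have "w!p < w!(p-1)"
  proof (cases "l = p")
    case True then show ?thesis using l by simp
  next
    case False
    then have "p < l" using l p by auto
    then have "w!p < w!l" using rlm_nth[OF assms(1), of p] p l by auto
    then show ?thesis using l by simp
  qed
  then show "p \<in> {j. 0 < j \<and> j + 1 < length w \<and> w ! (j - 1) > w ! j \<and> w ! j < w ! (j + 1)}"
    using p a by auto
qed

lemma cutpos_last: "distinct w \<Longrightarrow> w \<noteq> [] \<Longrightarrow> cutpos w (length w - 1)"
  unfolding cutpos_def using rlm_nth by auto

lemma inner_valleys_cut:
  assumes "distinct w" "avoids321 w" "w \<noteq> []"
  shows "inner_valleys w = card {p. cutpos w p} - 1"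
proof -
  have fin: "finite {p. cutpos w p}" unfolding cutpos_def by auto
  have eq: "{p. cutpos w p} = insert (length w - 1) {p. cutpos w p \<and> p + 1 < length w}"
    using cutpos_last[OF assms(1,3)] unfolding cutpos_def by auto
  have "length w - 1 \<notin> {p. cutpos w p \<and> p + 1 < length w}" by auto
  then have "card {p. cutpos w p} = Suc (card {p. cutpos w p \<and> p + 1 < length w})"
    using eq fin by (metis (no_types, lifting) card_insert_disjoint finite_insert)
  then show ?thesis unfolding inner_valleys_def using valleys_eq[OF assms(1,2)] by simp
qed

definition cuts :: "nat list \<Rightarrow> nat set" where
  "cuts w = (\<lambda>p. w!p) ` {p. cutpos w p}"

lemma card_cuts: "distinct w \<Longrightarrow> card (cuts w) = card {p. cutpos w p}"
  unfolding cuts_def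
  by (rule card_image) (auto simp: inj_on_def cutpos_def nth_eq_iff_index_eq)

definition colw :: "nat list \<Rightarrow> nat \<Rightarrow> nat" where
  "colw w x = card {c \<in> cuts w. before w c x}"

lemma before_adj:
  assumes "distinct w" "Suc p < length w"
  shows "\<not> (before w (w!p) z \<and> before w z (w!Suc p))"
proof
  assume h: "before w (w!p) z \<and> before w z (w!Suc p)"
  then obtain q where q: "q < length w" "w!q = z" unfolding before_def by blast
  have "p < q" using h q assms before_idx[OF assms(1), of p q] by auto
  moreover have "q < Suc p" using h q assms before_idx[OF assms(1), of q "Suc p"] by auto
  ultimately show False by simp
qed

locale twocol =
  fixes b :: nat and A B :: "nat \<Rightarrow> nat set"
  assumes b_pos: "1 \<le> b"
  and finA: "\<And>j. finite (A j)" and finB: "\<And>j. finite (B j)"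
  and Ane: "\<And>j. j < b \<Longrightarrow> A j \<noteq> {}"
  and Bne: "\<And>j. Suc j < b \<Longrightarrow> B j \<noteq> {}"
  and AA: "\<And>j j' x y. j < j' \<Longrightarrow> j' < b \<Longrightarrow> x \<in> A j \<Longrightarrow> y \<in> A j' \<Longrightarrow> x < y"
  and BB: "\<And>j j' x y. j < j' \<Longrightarrow> j' < b \<Longrightarrow> x \<in> B j \<Longrightarrow> y \<in> B j' \<Longrightarrow> x < y"
  and AB: "\<And>j j' x y. j \<le> j' \<Longrightarrow> j' < b \<Longrightarrow> x \<in> A j \<Longrightarrow> y \<in> B j' \<Longrightarrow> x < y"
  and disj: "\<And>j j'. j < b \<Longrightarrow> j' < b \<Longrightarrow> A j \<inter> B j' = {}"
begin

definition a where "a j = Max (A j)"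
definition blk where "blk j = sorted_list_of_set (A j - {a j}) @ sorted_list_of_set (B j) @ [a j]"
definition w where "w = concat (map blk [0..<b])"

lemma a_in: "j < b \<Longrightarrow> a j \<in> A j"
  unfolding a_def using Ane finA by auto

lemma a_max: "x \<in> A j \<Longrightarrow> x \<le> a j"
  unfolding a_def using finA by auto

lemma set_blk: "j < b \<Longrightarrow> set (blk j) = A j \<union> B j"
  unfolding blk_def using finA finB a_in by auto

lemma distinct_blk: "j < b \<Longrightarrow> distinct (blk j)"
  unfolding blk_def using finA finB a_in disj[of j j] by auto

lemma A_uniq: "j < b \<Longrightarrow> j' < b \<Longrightarrow> x \<in> A j \<Longrightarrow> x \<in> A j' \<Longrightarrow> j = j'"
  using AA by (metis less_irrefl nat_neq_iff)

lemma B_uniq: "j < b \<Longrightarrow> j' < b \<Longrightarrow> x \<in> B j \<Longrightarrow> x \<in> B j' \<Longrightarrow> j = j'"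
  using BB by (metis less_irrefl nat_neq_iff)

lemma blk_disj: "j < b \<Longrightarrow> j' < b \<Longrightarrow> j \<noteq> j' \<Longrightarrow> set (blk j) \<inter> set (blk j') = {}"
proof -
  assume jj: "j < b" "j' < b" "j \<noteq> j'"
  have "A j \<inter> A j' = {}"
    using A_uniq jj by blast
  moreover have "B j \<inter> B j' = {}"
    using B_uniq jj by blast
  ultimately show ?thesis using set_blk jj disj[of j j'] disj[of j' j] by auto
qed

lemma before_blk:
  assumes "j < b"
  shows "before (blk j) x y \<longleftrightarrow>
    (x \<in> A j - {a j} \<and> y \<in> A j - {a j} \<and> x < y) \<or> (x \<in> A j - {a j} \<and> y \<in> B j) \<or>
    (x \<in> (A j - {a j}) \<union> B j \<and> y = a j) \<or> (x \<in> B j \<and> y \<in> B j \<and> x < y)"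
  unfolding blk_def before_append using finA[of j] finB[of j]
  by (auto simp: before_sorted_list)

lemma w_KO:
  "distinct w \<and> (\<forall>j j' x y. j < b \<longrightarrow> j' < b \<longrightarrow> x \<in> set (blk j) \<longrightarrow> y \<in> set (blk j') \<longrightarrow>
       (before w x y \<longleftrightarrow> j < j' \<or> (j = j' \<and> before (blk j) x y)))"
  unfolding w_def by (rule before_concat_blocks) (auto simp: distinct_blk blk_disj)

lemma w_distinct: "distinct w" using w_KO by blast

lemma KO: "j < b \<Longrightarrow> j' < b \<Longrightarrow> x \<in> A j \<union> B j \<Longrightarrow> y \<in> A j' \<union> B j' \<Longrightarrow>
   before w x y \<longleftrightarrow> j < j' \<or> (j = j' \<and> before (blk j) x y)"
proof -
  assume h: "j < b" "j' < b" "x \<in> A j \<union> B j" "y \<in> A j' \<union> B j'"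
  then have "x \<in> set (blk j)" "y \<in> set (blk j')" using set_blk by auto
  then show ?thesis using w_KO[THEN conjunct2, rule_format, OF h(1,2)] by blast
qed

lemma set_w: "set w = (\<Union>j<b. A j \<union> B j)"
  unfolding w_def using set_blk by auto

lemma in_w: "x \<in> set w \<Longrightarrow> \<exists>j<b. x \<in> A j \<union> B j"
  using set_w by auto

lemma A_notB: "j < b \<Longrightarrow> j' < b \<Longrightarrow> x \<in> A j \<Longrightarrow> x \<notin> B j'"
  using disj by blast

lemma top_rlm:
  assumes "x \<in> set w"
  shows "rlm w x \<longleftrightarrow> (\<exists>j<b. x \<in> A j)"
proof
  assume r: "rlm w x"
  show "\<exists>j<b. x \<in> A j"
  proof (rule ccontr)
    assume "\<not> (\<exists>j<b. x \<in> A j)"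
    then obtain j where j: "j < b" "x \<in> B j" using in_w[OF assms] by auto
    have "before (blk j) x (a j)" using before_blk[OF j(1), of x "a j"] j(2) by blast
    then have "before w x (a j)" using KO[of j j x "a j"] a_in[OF j(1)] j by blast
    then have "x < a j" using rlm_before[OF w_distinct r] by blast
    moreover have "a j < x" using AB[of j j "a j" x] j a_in[OF j(1)] by blast
    ultimately show False by simp
  qed
next
  assume "\<exists>j<b. x \<in> A j"
  then obtain j where j: "j < b" "x \<in> A j" by auto
  have "x < y" if bw: "before w x y" for y
  proof -
    obtain j' where j': "j' < b" "y \<in> A j' \<union> B j'" using in_w[of y] before_set[OF bw] by blast
    have "j < j' \<or> (j = j' \<and> before (blk j) x y)" using KO[of j j' x y] j j' bw by auto
    then show "x < y"
    proof
      assume jl: "j < j'" then show ?thesis using j' AA[OF jl j'(1) j(2)] AB[OF _ j'(1) j(2), of y] by auto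
    next
      assume h: "j = j' \<and> before (blk j) x y"
      then have d: "(x \<in> A j - {a j} \<and> y \<in> A j - {a j} \<and> x < y) \<or> (x \<in> A j - {a j} \<and> y \<in> B j) \<or>
    (x \<in> (A j - {a j}) \<union> B j \<and> y = a j) \<or> (x \<in> B j \<and> y \<in> B j \<and> x < y)"
        using before_blk[OF j(1)] by blast
      have xB: "x \<notin> B j" using A_notB[OF j(1) j(1)] j(2) .
      have ax: "x \<le> a j" using a_max[OF j(2)] .
      show ?thesis
        using d
      proof (elim disjE)
        assume "x \<in> A j - {a j} \<and> y \<in> B j" then show ?thesis using AB[of j j x y] j(1) by blast
      next
        assume "x \<in> (A j - {a j}) \<union> B j \<and> y = a j" then show ?thesis using xB ax by auto
      qed auto
    qed
  qed
  then show "rlm w x" using rlm_iff[OF w_distinct assms] by blast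
qed

lemma bot_inc:
  assumes "before w x y" "j < b" "x \<in> B j" "j' < b" "y \<in> B j'"
  shows "x < y"
proof -
  have "j < j' \<or> (j = j' \<and> before (blk j) x y)" using KO[of j j' x y] assms by auto
  then show ?thesis
  proof
    assume jl: "j < j'" then show ?thesis using BB[OF jl assms(4) assms(3) assms(5)] by simp
  next
    assume "j = j' \<and> before (blk j) x y"
    then show ?thesis using before_blk[OF assms(2), of x y] assms(3,5) A_notB[OF assms(2) assms(2)] a_in[OF assms(2)] by auto
  qed
qed

lemma w_avoids: "avoids321 w"
proof (rule G321[OF w_distinct])
  fix x y assume h: "before w x y" "\<not> rlm w x" "\<not> rlm w y"
  have xy: "x \<in> set w" "y \<in> set w" using before_set[OF h(1)] by auto
  obtain j where j: "j < b" "x \<in> B j" using h xy top_rlm in_w by blast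
  obtain j' where j': "j' < b" "y \<in> B j'" using h xy top_rlm in_w by blast
  show "x < y" using bot_inc h j j' by blast
qed


lemma a_mono: "j < j' \<Longrightarrow> j' < b \<Longrightarrow> a j < a j'"
  using AA a_in by (meson order.strict_trans)

lemma a_inj: "inj_on a {..<b}"
proof (rule inj_onI)
  fix x y assume "x \<in> {..<b}" "y \<in> {..<b}" "a x = a y"
  then show "x = y" using a_mono[of x y] a_mono[of y x] by (metis lessThan_iff less_irrefl nat_neq_iff)
qed

lemma not_before_blk_a: "j < b \<Longrightarrow> \<not> before (blk j) (a j) y"
  using before_blk[of j "a j" y] A_notB[of j j "a j"] a_in[of j] by auto

lemma before_blk_to_a: "j < b \<Longrightarrow> x \<in> A j \<union> B j \<Longrightarrow> before (blk j) x (a j) \<longleftrightarrow> x \<noteq> a j"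
  using before_blk[of j x "a j"] A_notB[of j j "a j"] a_in[of j] by auto

lemma before_a: "j < b \<Longrightarrow> j' < b \<Longrightarrow> x \<in> A j \<union> B j \<Longrightarrow>
   before w x (a j') \<longleftrightarrow> j < j' \<or> (j = j' \<and> x \<noteq> a j)"
  using KO[of j j' x "a j'"] a_in[of j'] before_blk_to_a[of j x] by auto

lemma a_before: "j < b \<Longrightarrow> j' < b \<Longrightarrow> y \<in> A j' \<union> B j' \<Longrightarrow> before w (a j) y \<longleftrightarrow> j < j'"
  using KO[of j j' "a j" y] a_in[of j] not_before_blk_a[of j y] by auto

lemma a_in_w: "j < b \<Longrightarrow> a j \<in> set w"
  using set_w a_in by auto

lemma w_ne: "w \<noteq> []"
  using a_in_w[of 0] b_pos by auto

lemma cutpos_iff: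
  assumes p: "p < length w"
  shows "cutpos w p \<longleftrightarrow> (\<exists>j<b. w!p = a j)"
proof
  assume cp: "cutpos w p"
  then have r: "rlm w (w!p)" unfolding cutpos_def by auto
  have xin: "w!p \<in> set w" using p by simp
  obtain j where j: "j < b" "w!p \<in> A j" using top_rlm[OF xin] r by auto
  show "\<exists>j<b. w!p = a j"
  proof (rule ccontr)
    assume na: "\<not> (\<exists>j<b. w!p = a j)"
    then have bx: "before w (w!p) (a j)" using before_a[OF j(1) j(1), of "w!p"] j by auto
    obtain q where q: "q < length w" "w!q = a j" using a_in_w[OF j(1)] by (auto simp: in_set_conv_nth)
    have pq: "p < q" using bx q before_idx[OF w_distinct p q(1)] by simp
    then have "p \<noteq> length w - 1" using q by simp
    then have pp: "0 < p" "\<not> rlm w (w!(p-1))" using cp unfolding cutpos_def by auto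
    let ?z = "w!(p-1)"
    have zin: "?z \<in> set w" using p by simp
    obtain j' where j': "j' < b" "?z \<in> A j' \<union> B j'" using in_w[OF zin] by blast
    have zB: "?z \<in> B j'" using j' top_rlm[OF zin] pp by auto
    have bz: "before w ?z (w!p)" using before_idx[OF w_distinct, of "p-1" p] p pp by simp
    have "j' < j \<or> (j' = j \<and> before (blk j) ?z (w!p))" using KO[OF j'(1) j(1), of ?z "w!p"] bz j' j by auto
    moreover have "\<not> (j' = j \<and> before (blk j) ?z (w!p))"
      using before_blk[OF j(1), of ?z "w!p"] na j zB A_notB[OF j(1) j(1), of "w!p"] A_notB[OF j(1) j(1), of ?z] by auto
    ultimately have jj: "j' < j" by blast
    have "before w ?z (a j')" using before_a[OF j'(1) j'(1), of ?z] j'(2) zB A_notB[OF j'(1) j'(1), of "a j'"] a_in[OF j'(1)] by auto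
    moreover have "before w (a j') (w!p)" using a_before[OF j'(1) j(1), of "w!p"] jj j by auto
    ultimately show False using before_adj[OF w_distinct, of "p-1" "a j'"] pp p by simp
  qed
next
  assume "\<exists>j<b. w!p = a j"
  then obtain j where j: "j < b" "w!p = a j" by auto
  have r: "rlm w (w!p)" using top_rlm[of "w!p"] p j a_in[OF j(1)] a_in_w[OF j(1)] by auto
  show "cutpos w p"
  proof (cases "Suc j < b")
    case False
    then have jb: "j = b - 1" using j by simp
    have "p = length w - 1"
    proof (rule ccontr)
      assume "p \<noteq> length w - 1"
      then have pl: "p < length w - 1" using p by simp
      let ?y = "w!(length w - 1)"
      have yin: "?y \<in> set w" using p by simp
      have yne: "?y \<noteq> w!p" using pl p w_distinct by (simp add: nth_eq_iff_index_eq)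
      obtain j0 where j0: "j0 < b" "?y \<in> A j0 \<union> B j0" using in_w[OF yin] by blast
      have "j0 < j \<or> j0 = j" using j0(1) jb by auto
      then have "before w ?y (a j)" using before_a[OF j0(1) j(1), of ?y] j0(2) yne j(2) by auto
      then have "length w - 1 < p" using before_idx[OF w_distinct, of "length w - 1" p] p j by simp
      then show False using pl by simp
    qed
    then show ?thesis unfolding cutpos_def using r p by simp
  next
    case True
    obtain m where m: "m \<in> B j" using Bne[OF True] by auto
    have bm: "before w m (w!p)" using before_a[OF j(1) j(1), of m] m j A_notB[OF j(1) j(1), of "a j"] a_in[OF j(1)] by auto
    obtain q where q: "q < length w" "w!q = m" using before_set[OF bm] by (auto simp: in_set_conv_nth)
    have "q < p" using bm q before_idx[OF w_distinct q(1) p] by simp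
    then have p0: "0 < p" by simp
    let ?z = "w!(p-1)"
    have "\<not> rlm w ?z"
    proof
      assume rz: "rlm w ?z"
      have zin: "?z \<in> set w" using p by simp
      obtain j' where j': "j' < b" "?z \<in> A j'" using top_rlm[OF zin] rz by auto
      have bz: "before w ?z (w!p)" using before_idx[OF w_distinct, of "p-1" p] p p0 by simp
      then have "j' < j \<or> (j' = j \<and> ?z \<noteq> a j)" using before_a[OF j'(1) j(1), of ?z] j' j by auto
      then have "before w ?z m"
      proof
        assume "j' < j" then show ?thesis using KO[OF j'(1) j(1), of ?z m] j' m by auto
      next
        assume h: "j' = j \<and> ?z \<noteq> a j"
        then have "before (blk j) ?z m" using before_blk[OF j(1), of ?z m] j' m by auto
        then show ?thesis using KO[OF j'(1) j(1), of ?z m] j' m h by auto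
      qed
      then show False using before_adj[OF w_distinct, of "p-1" m] bm p p0 by simp
    qed
    then show ?thesis unfolding cutpos_def using r p p0 by simp
  qed
qed

lemma cuts_eq: "cuts w = a ` {..<b}"
proof
  show "cuts w \<subseteq> a ` {..<b}"
  proof
    fix c assume "c \<in> cuts w"
    then obtain p where p: "cutpos w p" "c = w!p" unfolding cuts_def by auto
    then have "p < length w" unfolding cutpos_def by simp
    then obtain j where "j < b" "w!p = a j" using cutpos_iff p by blast
    then show "c \<in> a ` {..<b}" using p by auto
  qed
  show "a ` {..<b} \<subseteq> cuts w"
  proof
    fix c assume "c \<in> a ` {..<b}"
    then obtain j where j: "j < b" "c = a j" by auto
    obtain p where p: "p < length w" "w!p = c" using a_in_w[OF j(1)] j by (auto simp: in_set_conv_nth)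
    have "cutpos w p" using cutpos_iff[OF p(1)] p j by auto
    then show "c \<in> cuts w" unfolding cuts_def using p by auto
  qed
qed

lemma card_cuts_b: "card (cuts w) = b"
  using cuts_eq card_image[OF a_inj] by simp

lemma w_valleys: "inner_valleys w = b - 1"
  using inner_valleys_cut[OF w_distinct w_avoids w_ne] card_cuts[OF w_distinct] card_cuts_b by simp

lemma colw_eq:
  assumes "j < b" "x \<in> A j \<union> B j"
  shows "colw w x = j"
proof -
  have "{c \<in> cuts w. before w c x} = a ` {..<j}"
  proof
    show "{c \<in> cuts w. before w c x} \<subseteq> a ` {..<j}"
      using a_before[OF _ assms(1,2)] unfolding cuts_eq by auto
    show "a ` {..<j} \<subseteq> {c \<in> cuts w. before w c x}"
      using a_before[OF _ assms(1,2)] assms(1) unfolding cuts_eq by auto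
  qed
  moreover have "inj_on a {..<j}" using a_inj assms(1) by (auto intro: inj_on_subset)
  ultimately show ?thesis unfolding colw_def by (simp add: card_image)
qed

end

lemma cells_bb: "cells [b,b] = {(i,j). i < 2 \<and> j < b}"
  unfolding cells_def by (auto simp: less_2_cases_iff nth_Cons split: nat.splits)

lemma SYT_D:
  assumes "T \<in> SYT_plus [b,b] k"
  shows SYT_out: "\<And>i j. \<not> (i < 2 \<and> j < b) \<Longrightarrow> T i j = {}"
    and SYT_ne: "\<And>i j. i < 2 \<Longrightarrow> j < b \<Longrightarrow> T i j \<noteq> {}"
    and SYT_disj: "\<And>i j i' j'. i < 2 \<Longrightarrow> j < b \<Longrightarrow> i' < 2 \<Longrightarrow> j' < b \<Longrightarrow>
        (i,j) \<noteq> (i',j') \<Longrightarrow> T i j \<inter> T i' j' = {}"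
    and SYT_union: "(\<Union>(i, j) \<in> {(i,j). i < 2 \<and> j < b}. T i j) = {1..2*b+k}"
    and SYT_mm: "\<And>i j i' j'. i < 2 \<Longrightarrow> j < b \<Longrightarrow> i' < 2 \<Longrightarrow> j' < b \<Longrightarrow>
        (i,j) \<noteq> (i',j') \<Longrightarrow> i \<le> i' \<Longrightarrow> j \<le> j' \<Longrightarrow> Max (T i j) < Min (T i' j')"
proof -
  have h0: "(\<forall>i j. (i, j) \<notin> cells [b,b] \<longrightarrow> T i j = {}) \<and>
     (\<forall>(i, j) \<in> cells [b,b]. T i j \<noteq> {}) \<and>
     (\<forall>(i, j) \<in> cells [b,b]. \<forall>(i', j') \<in> cells [b,b]. (i, j) \<noteq> (i', j') \<longrightarrow> T i j \<inter> T i' j' = {}) \<and>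
     (\<Union>(i, j) \<in> cells [b,b]. T i j) = {1..sum_list [b,b] + k} \<and>
     (\<forall>(i, j) \<in> cells [b,b]. \<forall>(i', j') \<in> cells [b,b].
        (i, j) \<noteq> (i', j') \<and> i \<le> i' \<and> j \<le> j' \<longrightarrow> Max (T i j) < Min (T i' j'))"
    using assms unfolding SYT_plus_def mem_Collect_eq .
  note h = h0[THEN conjunct1] h0[THEN conjunct2, THEN conjunct1] h0[THEN conjunct2, THEN conjunct2, THEN conjunct1]
    h0[THEN conjunct2, THEN conjunct2, THEN conjunct2, THEN conjunct1] h0[THEN conjunct2, THEN conjunct2, THEN conjunct2, THEN conjunct2]
  note hh = h[unfolded cells_bb]
  show "\<And>i j. \<not> (i < 2 \<and> j < b) \<Longrightarrow> T i j = {}" using hh(1) by simp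
  show "\<And>i j. i < 2 \<Longrightarrow> j < b \<Longrightarrow> T i j \<noteq> {}" using hh(2) by blast
  show "\<And>i j i' j'. i < 2 \<Longrightarrow> j < b \<Longrightarrow> i' < 2 \<Longrightarrow> j' < b \<Longrightarrow>
        (i,j) \<noteq> (i',j') \<Longrightarrow> T i j \<inter> T i' j' = {}"
  proof -
    fix i j i' j' :: nat assume a: "i < 2" "j < b" "i' < 2" "j' < b" "(i,j) \<noteq> (i',j')"
    have m: "(i,j) \<in> {(i,j). i < 2 \<and> j < b}" "(i',j') \<in> {(i,j). i < 2 \<and> j < b}" using a by auto
    have h1: "\<forall>(i', j') \<in> {(i,j). i < 2 \<and> j < b}. (i, j) \<noteq> (i', j') \<longrightarrow> T i j \<inter> T i' j' = {}"
      using bspec[OF hh(3) m(1)] by simp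
    show "T i j \<inter> T i' j' = {}" using bspec[OF h1 m(2)] a(5) by simp
  qed
  show "(\<Union>(p, q) \<in> {(p,q). p < 2 \<and> q < b}. T p q) = {1..2*b+k}" using hh(4) by simp
  show "\<And>i j i' j'. i < 2 \<Longrightarrow> j < b \<Longrightarrow> i' < 2 \<Longrightarrow> j' < b \<Longrightarrow>
        (i,j) \<noteq> (i',j') \<Longrightarrow> i \<le> i' \<Longrightarrow> j \<le> j' \<Longrightarrow> Max (T i j) < Min (T i' j')"
  proof -
    fix i j i' j' :: nat assume a: "i < 2" "j < b" "i' < 2" "j' < b" "(i,j) \<noteq> (i',j')" "i \<le> i'" "j \<le> j'"
    have m: "(i,j) \<in> {(i,j). i < 2 \<and> j < b}" "(i',j') \<in> {(i,j). i < 2 \<and> j < b}" using a by auto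
    have h1: "\<forall>(i', j') \<in> {(i,j). i < 2 \<and> j < b}. (i, j) \<noteq> (i', j') \<and> i \<le> i' \<and> j \<le> j' \<longrightarrow> Max (T i j) < Min (T i' j')"
      using bspec[OF hh(5) m(1)] by simp
    show "Max (T i j) < Min (T i' j')" using bspec[OF h1 m(2)] a(5-7) by simp
  qed
qed

lemma SYT_fin:
  assumes T: "T \<in> SYT_plus [b,b] k"
  shows "finite (T i j)"
proof (cases "i < 2 \<and> j < b")
  case True
  then have "T i j \<subseteq> (\<Union>(i, j) \<in> {(i,j). i < 2 \<and> j < b}. T i j)" by blast
  then show ?thesis unfolding SYT_union[OF T] using finite_subset by blast
next
  case False
  then show ?thesis using SYT_out[OF T] by simp
qed

lemma SYT_lt:
  assumes T: "T \<in> SYT_plus [b,b] k" and c: "i < 2" "j < b" "i' < 2" "j' < b" "(i,j) \<noteq> (i',j')" "i \<le> i'" "j \<le> j'"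
    and xy: "x \<in> T i j" "y \<in> T i' j'"
  shows "x < y"
proof -
  have "Max (T i j) < Min (T i' j')" using SYT_mm[OF T c] .
  moreover have "x \<le> Max (T i j)" using SYT_fin[OF T] xy by auto
  moreover have "Min (T i' j') \<le> y" using SYT_fin[OF T] xy by auto
  ultimately show ?thesis by simp
qed

definition recon :: "nat \<Rightarrow> nat list \<Rightarrow> nat \<times> (nat \<Rightarrow> nat \<Rightarrow> nat set)" where
  "recon n w = (card (cuts w), \<lambda>i j. if j < card (cuts w) then (if i = 0 then {x \<in> set w. rlm w x \<and> colw w x = j}
      else if i = 1 then {x \<in> set w. \<not> rlm w x \<and> colw w x = j} \<union> (if j = card (cuts w) - 1 then {n} else {})
      else {}) else {})"

locale tab =
  fixes n b :: nat and T :: "nat \<Rightarrow> nat \<Rightarrow> nat set"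
  assumes mem: "(b, T) \<in> SYT_two_rows n"
begin

lemma b1: "1 \<le> b" and bn: "2 * b \<le> n" and T: "T \<in> SYT_plus [b,b] (n - 2*b)"
  using mem unfolding SYT_two_rows_def by auto

lemma union: "(\<Union>(i, j) \<in> {(i,j). i < 2 \<and> j < b}. T i j) = {1..n}"
  using SYT_union[OF T] bn by simp

lemma n_last: "n \<in> T 1 (b - 1)"
proof -
  have "n \<in> {1..n}" using bn b1 by simp
  then have "n \<in> (\<Union>(i, j) \<in> {(i,j). i < 2 \<and> j < b}. T i j)" using union by simp
  then obtain i j where ij: "i < 2" "j < b" "n \<in> T i j" by blast
  show ?thesis
  proof (rule ccontr)
    assume "n \<notin> T 1 (b - 1)"
    then have ne: "(i,j) \<noteq> (1, b-1)" using ij by auto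
    obtain y where y: "y \<in> T 1 (b-1)" using SYT_ne[OF T, of 1 "b-1"] b1 by auto
    have "n < y" using SYT_lt[OF T, of i j 1 "b-1" n y] ij ne y b1 by auto
    moreover have "y \<in> {1..n}" using union y b1 by fastforce
    ultimately show False by simp
  qed
qed

lemma n_not: "i < 2 \<Longrightarrow> j < b \<Longrightarrow> (i,j) \<noteq> (1, b-1) \<Longrightarrow> n \<notin> T i j"
  using SYT_disj[OF T, of i j 1 "b-1"] n_last b1 by auto

definition Bt where "Bt j = T 1 j - {n}"

lemma twocol: "twocol b (T 0) Bt"
proof
  show "1 \<le> b" by (rule b1)
  show "finite (T 0 j)" for j using SYT_fin[OF T] .
  show "finite (Bt j)" for j unfolding Bt_def using SYT_fin[OF T] by simp
  show "T 0 j \<noteq> {}" if "j < b" for j using SYT_ne[OF T] that by simp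
  show "Bt j \<noteq> {}" if "Suc j < b" for j
    unfolding Bt_def using SYT_ne[OF T, of 1 j] n_not[of 1 j] that by auto
  show "x < y" if "j < j'" "j' < b" "x \<in> T 0 j" "y \<in> T 0 j'" for j j' x y
    using SYT_lt[OF T, of 0 j 0 j' x y] that by auto
  show "x < y" if "j < j'" "j' < b" "x \<in> Bt j" "y \<in> Bt j'" for j j' x y
    using SYT_lt[OF T, of 1 j 1 j' x y] that unfolding Bt_def by auto
  show "x < y" if "j \<le> j'" "j' < b" "x \<in> T 0 j" "y \<in> Bt j'" for j j' x y
    using SYT_lt[OF T, of 0 j 1 j' x y] that unfolding Bt_def by auto
  show "T 0 j \<inter> Bt j' = {}" if "j < b" "j' < b" for j j'
    using SYT_disj[OF T, of 0 j 1 j'] that unfolding Bt_def by auto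
qed

sublocale tc: twocol b "T 0" Bt by (rule twocol)

lemma alpha_eq: "alpha_word n b T = tc.w"
  unfolding alpha_word_def tc.w_def
proof (rule arg_cong[where f = concat], rule map_cong[OF refl])
  fix j assume "j \<in> set [0..<b]"
  then have j: "j < b" by simp
  have "(if j = b - 1 then T 1 j - {n} else T 1 j) = Bt j"
    unfolding Bt_def using n_not[of 1 j] j by auto
  then show "(let A = T 0 j; B = if j = b - 1 then T 1 j - {n} else T 1 j
          in sorted_list_of_set (A - {Max A}) @ sorted_list_of_set B @ [Max A]) = tc.blk j"
    unfolding tc.blk_def tc.a_def Let_def by simp
qed

lemma set_alpha: "set tc.w = {1..n-1}"
proof -
  have "set tc.w = (\<Union>j<b. T 0 j \<union> Bt j)" by (rule tc.set_w)
  also have "\<dots> = (\<Union>(i, j) \<in> {(i,j). i < 2 \<and> j < b}. T i j) - {n}"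
    unfolding Bt_def using n_not by (auto simp: less_2_cases_iff)
  also have "\<dots> = {1..n-1}" using union by auto
  finally show ?thesis .
qed

lemma perm: "tc.w \<in> perms321 (n - 1)"
  unfolding perms321_def using tc.w_distinct set_alpha tc.w_avoids by auto

lemma rlmin: "(\<Union>j<b. T 0 j) = rl_min_values tc.w"
proof
  show "(\<Union>j<b. T 0 j) \<subseteq> rl_min_values tc.w"
  proof
    fix x assume "x \<in> (\<Union>j<b. T 0 j)"
    then obtain j where j: "j < b" "x \<in> T 0 j" by auto
    then have "x \<in> set tc.w" using tc.set_w by auto
    then show "x \<in> rl_min_values tc.w" using tc.top_rlm j unfolding rlm_def by auto
  qed
  show "rl_min_values tc.w \<subseteq> (\<Union>j<b. T 0 j)"
  proof
    fix x assume x: "x \<in> rl_min_values tc.w"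
    then have "x \<in> set tc.w" using rlm_in_set unfolding rlm_def by auto
    then show "x \<in> (\<Union>j<b. T 0 j)" using tc.top_rlm x unfolding rlm_def by auto
  qed
qed


lemma recon_alpha: "recon n tc.w = (b, T)"
proof -
  have cb: "card (cuts tc.w) = b" by (rule tc.card_cuts_b)
  have A: "{x \<in> set tc.w. rlm tc.w x \<and> colw tc.w x = j} = T 0 j" if j: "j < b" for j
  proof (intro set_eqI iffI)
    fix x assume "x \<in> {x \<in> set tc.w. rlm tc.w x \<and> colw tc.w x = j}"
    then have x: "x \<in> set tc.w" "rlm tc.w x" "colw tc.w x = j" by auto
    obtain j' where j': "j' < b" "x \<in> T 0 j'" using tc.top_rlm[OF x(1)] x(2) by auto
    have "colw tc.w x = j'" using tc.colw_eq[OF j'(1)] j'(2) by auto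
    then show "x \<in> T 0 j" using x j' by simp
  next
    fix x assume x: "x \<in> T 0 j"
    have xs: "x \<in> set tc.w" using tc.set_w x j by auto
    then show "x \<in> {x \<in> set tc.w. rlm tc.w x \<and> colw tc.w x = j}"
      using tc.top_rlm[OF xs] x j tc.colw_eq[OF j, of x] by auto
  qed
  have B: "{x \<in> set tc.w. \<not> rlm tc.w x \<and> colw tc.w x = j} = Bt j" if j: "j < b" for j
  proof (intro set_eqI iffI)
    fix x assume "x \<in> {x \<in> set tc.w. \<not> rlm tc.w x \<and> colw tc.w x = j}"
    then have x: "x \<in> set tc.w" "\<not> rlm tc.w x" "colw tc.w x = j" by auto
    obtain j' where j': "j' < b" "x \<in> T 0 j' \<union> Bt j'" using tc.in_w[OF x(1)] by auto
    have xb: "x \<in> Bt j'" using j' tc.top_rlm[OF x(1)] x(2) by auto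
    have "colw tc.w x = j'" using tc.colw_eq[OF j'(1)] xb by auto
    then show "x \<in> Bt j" using x xb by simp
  next
    fix x assume x: "x \<in> Bt j"
    have xs: "x \<in> set tc.w" using tc.set_w x j by auto
    have "\<not> rlm tc.w x"
    proof
      assume "rlm tc.w x"
      then obtain j' where "j' < b" "x \<in> T 0 j'" using tc.top_rlm[OF xs] by auto
      then show False using tc.A_notB[of j' j x] j x by auto
    qed
    then show "x \<in> {x \<in> set tc.w. \<not> rlm tc.w x \<and> colw tc.w x = j}"
      using xs tc.colw_eq[OF j, of x] x by auto
  qed
  have B1: "Bt j \<union> (if j = b - 1 then {n} else {}) = T 1 j" if j: "j < b" for j
    unfolding Bt_def using n_last n_not[of 1 j] j by auto
  have "(\<lambda>i j. if j < b then (if i = 0 then {x \<in> set tc.w. rlm tc.w x \<and> colw tc.w x = j}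
      else if i = 1 then {x \<in> set tc.w. \<not> rlm tc.w x \<and> colw tc.w x = j} \<union> (if j = b - 1 then {n} else {})
      else {}) else {}) = T"
  proof (intro ext)
    fix i j
    show "(if j < b then (if i = 0 then {x \<in> set tc.w. rlm tc.w x \<and> colw tc.w x = j}
      else if i = 1 then {x \<in> set tc.w. \<not> rlm tc.w x \<and> colw tc.w x = j} \<union> (if j = b - 1 then {n} else {})
      else {}) else {}) = T i j"
      using A B B1 SYT_out[OF T, of i j] by auto
  qed
  then show ?thesis unfolding recon_def cb by simp
qed

end

lemma Max_lt_Min: "finite X \<Longrightarrow> finite Y \<Longrightarrow> X \<noteq> {} \<Longrightarrow> Y \<noteq> {} \<Longrightarrow> (\<And>x y. x \<in> X \<Longrightarrow> y \<in> Y \<Longrightarrow> x < y)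
  \<Longrightarrow> Max X < Min (Y :: nat set)"
  by (simp add: Max_less_iff)

context twocol
begin

definition Tp :: "nat \<Rightarrow> nat \<Rightarrow> nat \<Rightarrow> nat set" where
  "Tp n = (\<lambda>i j. if j < b then (if i = 0 then A j else if i = 1 then B j \<union> (if j = b - 1 then {n} else {}) else {}) else {})"

lemma B_inj: "inj_on (\<lambda>j. Min (B j)) {..<b-1}"
proof (rule inj_onI)
  fix x y assume xy: "x \<in> {..<b-1}" "y \<in> {..<b-1}" "Min (B x) = Min (B y)"
  have "B x \<noteq> {}" "B y \<noteq> {}" using xy Bne by auto
  then have "Min (B x) \<in> B x" "Min (B y) \<in> B y" using finB by auto
  then have m: "Min (B x) \<in> B x" "Min (B y) \<in> B y" .
  have xb: "x < b" "y < b" using xy by auto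
  show "x = y"
  proof (rule ccontr)
    assume "x \<noteq> y"
    then have "x < y \<or> y < x" by auto
    then show False
    proof
      assume "x < y" then show False using BB[OF _ xb(2) m(1) m(2)] xy(3) by simp
    next
      assume "y < x" then show False using BB[OF _ xb(1) m(2) m(1)] xy(3) by simp
    qed
  qed
qed

lemma pack:
  assumes U: "(\<Union>j<b. A j \<union> B j) = {1..n-1}" and n2: "2 \<le> n"
  shows "(b, Tp n) \<in> SYT_two_rows n"
proof -
  have AU: "x \<in> A j \<Longrightarrow> j < b \<Longrightarrow> x \<in> {1..n-1}" for x j using U by blast
  have BU: "x \<in> B j \<Longrightarrow> j < b \<Longrightarrow> x \<in> {1..n-1}" for x j using U by blast
  have bn: "2 * b \<le> n"
  proof -
    let ?S1 = "a ` {..<b}" and ?S2 = "(\<lambda>j. Min (B j)) ` {..<b-1}"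
    have s1: "?S1 \<subseteq> {1..n-1}"
    proof
      fix x assume "x \<in> ?S1"
      then obtain j where j: "j < b" "x = a j" by auto
      then show "x \<in> {1..n-1}" using AU[OF a_in[OF j(1)] j(1)] by simp
    qed
    have s2: "?S2 \<subseteq> {1..n-1}"
    proof
      fix x assume "x \<in> ?S2"
      then obtain j where j: "j < b - 1" "x = Min (B j)" by auto
      then have "x \<in> B j" using Bne[of j] finB[of j] by auto
      then show "x \<in> {1..n-1}" using BU j by auto
    qed
    have d: "?S1 \<inter> ?S2 = {}"
    proof -
      { fix x assume "x \<in> ?S1" "x \<in> ?S2"
        then obtain j j' where jj: "j < b" "x = a j" "j' < b - 1" "x = Min (B j')" by auto
        have "B j' \<noteq> {}" using Bne[of j'] jj by auto
        then have "Min (B j') \<in> B j'" using finB[of j'] by (rule Min_in[rotated])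
        then have "x \<in> B j'" using jj by simp
        moreover have "x \<in> A j" using jj a_in by auto
        moreover have "j' < b" using jj by auto
        ultimately have False using disj[of j j'] jj by auto }
      then show ?thesis by blast
    qed
    have "card (?S1 \<union> ?S2) = b + (b - 1)"
      using card_Un_disjoint[OF _ _ d] card_image[OF a_inj] card_image[OF B_inj] by simp
    moreover have "card (?S1 \<union> ?S2) \<le> n - 1"
      using card_mono[of "{1..n-1}" "?S1 \<union> ?S2"] s1 s2 by simp
    ultimately show ?thesis using b_pos by simp
  qed
  have nA: "n \<notin> A j" if "j < b" for j using AU[of n j] that by auto
  have nB: "n \<notin> B j" if "j < b" for j using BU[of n j] that by auto
  have fin: "finite (Tp n i j)" for i j unfolding Tp_def using finA finB by auto
  have out: "\<not> (i < 2 \<and> j < b) \<Longrightarrow> Tp n i j = {}" for i j unfolding Tp_def by auto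
  have ne: "i < 2 \<Longrightarrow> j < b \<Longrightarrow> Tp n i j \<noteq> {}" for i j
  proof -
    assume ij: "i < 2" "j < b"
    show ?thesis
    proof (cases "i = 0")
      case True then show ?thesis unfolding Tp_def using Ane ij by auto
    next
      case False
      then have "i = 1" using ij by auto
      then show ?thesis unfolding Tp_def using Bne[of j] ij by (cases "j = b - 1") auto
    qed
  qed
  have lt: "x < y" if ij: "i < 2" "j < b" "i' < 2" "j' < b" "(i,j) \<noteq> (i',j')" "i \<le> i'" "j \<le> j'"
     and xy: "x \<in> Tp n i j" "y \<in> Tp n i' j'" for i j i' j' x y
  proof (cases "i = 0")
    case i0: True
    then have x: "x \<in> A j" using xy ij unfolding Tp_def by auto
    show ?thesis
    proof (cases "i' = 0")
      case True
      then have "j < j'" "y \<in> A j'" using xy ij i0 unfolding Tp_def by auto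
      then show ?thesis using AA[of j j' x y] x ij by auto
    next
      case False
      then have i1: "i' = 1" using ij by auto
      then have "y \<in> B j' \<or> y = n" using xy ij unfolding Tp_def by (auto split: if_splits)
      then show ?thesis
      proof
        assume "y \<in> B j'" then show ?thesis using AB[of j j' x y] x ij by auto
      next
        assume "y = n" then show ?thesis using AU[OF x ij(2)] n2 by auto
      qed
    qed
  next
    case False
    then have i1: "i = 1" "i' = 1" using ij by auto
    then have jj: "j < j'" using ij by auto
    have x: "x \<in> B j" using xy ij i1 jj unfolding Tp_def by (auto split: if_splits)
    have "y \<in> B j' \<or> y = n" using xy ij i1 unfolding Tp_def by (auto split: if_splits)
    then show ?thesis
    proof
      assume "y \<in> B j'" then show ?thesis using BB[of j j' x y] x ij jj by auto
    next
      assume "y = n" then show ?thesis using BU[OF x ij(2)] n2 by auto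
    qed
  qed
  have disjT: "Tp n i j \<inter> Tp n i' j' = {}" if ij: "i < 2" "j < b" "i' < 2" "j' < b" "(i,j) \<noteq> (i',j')" for i j i' j'
  proof -
    { fix x assume x: "x \<in> Tp n i j" "x \<in> Tp n i' j'"
      have False
      proof (cases "i \<le> i' \<and> j \<le> j'")
        case True then show False using lt[OF ij True[THEN conjunct1] True[THEN conjunct2] x] by simp
      next
        case F: False
        show False
        proof (cases "i' \<le> i \<and> j' \<le> j")
          case True then show False using lt[OF ij(3,4,1,2) _ True[THEN conjunct1] True[THEN conjunct2] x(2) x(1)] ij(5) by auto
        next
          case False
          then have "(i = 0 \<and> i' = 1 \<and> j' < j) \<or> (i = 1 \<and> i' = 0 \<and> j < j')" using F ij by auto
          then show False
          proof
            assume h: "i = 0 \<and> i' = 1 \<and> j' < j"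
            then have "x \<in> A j" "x \<in> B j' \<or> x = n" using x ij unfolding Tp_def by (auto split: if_splits)
            then show False using disj[of j j'] nA[of j] ij by auto
          next
            assume h: "i = 1 \<and> i' = 0 \<and> j < j'"
            then have "x \<in> A j'" "x \<in> B j \<or> x = n" using x ij unfolding Tp_def by (auto split: if_splits)
            then show False using disj[of j' j] nA[of j'] ij by auto
          qed
        qed
      qed }
    then show ?thesis by blast
  qed
  have uni: "(\<Union>(p, q) \<in> {(p,q). p < 2 \<and> q < b}. Tp n p q) = {1..n}"
  proof -
    have "(\<Union>(p, q) \<in> {(p,q). p < 2 \<and> q < b}. Tp n p q) = (\<Union>j<b. A j \<union> B j) \<union> {n}"
    proof (intro set_eqI iffI)
      fix x assume "x \<in> (\<Union>(p, q) \<in> {(p,q). p < 2 \<and> q < b}. Tp n p q)"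
      then obtain p q where "p < 2" "q < b" "x \<in> Tp n p q" by auto
      then show "x \<in> (\<Union>j<b. A j \<union> B j) \<union> {n}" unfolding Tp_def by (auto split: if_splits)
    next
      fix x assume "x \<in> (\<Union>j<b. A j \<union> B j) \<union> {n}"
      then consider "x = n" | j where "j < b" "x \<in> A j" | j where "j < b" "x \<in> B j" by auto
      then show "x \<in> (\<Union>(p, q) \<in> {(p,q). p < 2 \<and> q < b}. Tp n p q)"
      proof cases
        case 1
        have "x \<in> Tp n 1 (b-1)" unfolding Tp_def using 1 b_pos by auto
        then show ?thesis using b_pos by force
      next
        case (2 j)
        have "x \<in> Tp n 0 j" unfolding Tp_def using 2 by auto
        then show ?thesis using 2 by force
      next
        case (3 j)
        have "x \<in> Tp n 1 j" unfolding Tp_def using 3 by auto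
        then show ?thesis using 3 by force
      qed
    qed
    also have "\<dots> = {1..n}" using U n2 by auto
    finally show ?thesis .
  qed
  have mm: "Max (Tp n i j) < Min (Tp n i' j')" if h: "i < 2" "j < b" "i' < 2" "j' < b" "(i, j) \<noteq> (i', j')" "i \<le> i'" "j \<le> j'" for i j i' j'
    by (rule Max_lt_Min[OF fin fin ne[OF h(1,2)] ne[OF h(3,4)]]) (rule lt[OF h])
  have "Tp n \<in> SYT_plus [b,b] (n - 2*b)"
    unfolding SYT_plus_def mem_Collect_eq cells_bb
  apply (intro conjI)
  subgoal using out by auto
  subgoal using ne by auto
  subgoal using disjT by auto
  subgoal using uni bn by simp
  subgoal using mm by blast
  done
  then show ?thesis unfolding SYT_two_rows_def using b_pos bn by auto
qed

end

locale pw =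
  fixes w :: "nat list"
  assumes dist: "distinct w" and av: "avoids321 w" and ne: "w \<noteq> []"
begin

definition bb where "bb = card (cuts w)"
definition Ar where "Ar j = {x \<in> set w. rlm w x \<and> colw w x = j}"
definition Br where "Br j = {x \<in> set w. \<not> rlm w x \<and> colw w x = j}"
definition lst where "lst = w ! (length w - 1)"

lemma fin_cuts: "finite (cuts w)"
  unfolding cuts_def cutpos_def by auto

lemma cuts_set: "c \<in> cuts w \<Longrightarrow> c \<in> set w \<and> rlm w c"
  unfolding cuts_def cutpos_def by auto

lemma lst_cut: "lst \<in> cuts w"
  unfolding cuts_def lst_def using cutpos_last[OF dist ne] by auto

lemma lst_in: "lst \<in> set w"
  unfolding lst_def using ne by simp

lemma before_lst: "x \<in> set w \<Longrightarrow> x \<noteq> lst \<Longrightarrow> before w x lst"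
proof -
  assume x: "x \<in> set w" "x \<noteq> lst"
  then obtain i where i: "i < length w" "w!i = x" by (auto simp: in_set_conv_nth)
  then have "i \<noteq> length w - 1" using x unfolding lst_def by auto
  then have "i < length w - 1" using i by simp
  then show ?thesis unfolding before_def lst_def using i by (intro exI[of _ i] exI[of _ "length w - 1"]) auto
qed

lemma not_before_lst: "\<not> before w lst y"
  unfolding before_def lst_def using dist by (auto simp: nth_eq_iff_index_eq)

lemma col_mono: "before w x y \<Longrightarrow> colw w x \<le> colw w y"
  unfolding colw_def
  by (rule card_mono) (auto simp: fin_cuts intro: before_trans[OF dist])

lemma col_strict:
  assumes c: "c \<in> cuts w" and xc: "c = x \<or> before w x c" and cy: "before w c y"
  shows "colw w x < colw w y"
  unfolding colw_def
proof (rule psubset_card_mono)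
  show "finite {c \<in> cuts w. before w c y}" using fin_cuts by auto
  have "{c \<in> cuts w. before w c x} \<subseteq> {c \<in> cuts w. before w c y}"
  proof
    fix c' assume "c' \<in> {c \<in> cuts w. before w c x}"
    then have "c' \<in> cuts w" "before w c' x" by auto
    moreover have "before w x y" using xc cy before_trans[OF dist] by blast
    ultimately show "c' \<in> {c \<in> cuts w. before w c y}" using before_trans[OF dist] by blast
  qed
  moreover have "c \<notin> {c \<in> cuts w. before w c x}"
    using xc before_irrefl[OF dist] before_asym[OF dist] by auto
  moreover have "c \<in> {c \<in> cuts w. before w c y}" using c cy by auto
  ultimately show "{c \<in> cuts w. before w c x} \<subset> {c \<in> cuts w. before w c y}" by blast
qed

lemma bb_pos: "1 \<le> bb"
proof -
  have "card (cuts w) \<noteq> 0" using lst_cut fin_cuts by auto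
  then show ?thesis unfolding bb_def by simp
qed

lemma col_lt: "colw w x < bb"
proof -
  have "{c \<in> cuts w. before w c x} \<subseteq> cuts w - {lst}" using not_before_lst by auto
  then have "colw w x \<le> card (cuts w - {lst})" unfolding colw_def using fin_cuts by (simp add: card_mono)
  also have "\<dots> < bb" unfolding bb_def by (rule card_Diff1_less[OF fin_cuts lst_cut])
  finally show ?thesis .
qed

lemma col_inj: "inj_on (colw w) (cuts w)"
proof (rule inj_onI)
  fix c c' assume cc: "c \<in> cuts w" "c' \<in> cuts w" "colw w c = colw w c'"
  show "c = c'"
  proof (rule ccontr)
    assume "c \<noteq> c'"
    then have "before w c c' \<or> before w c' c" using before_total[OF dist] cuts_set cc by blast
    then show False
    proof
      assume "before w c c'" then show False using col_strict[OF cc(1), of c c'] cc by simp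
    next
      assume "before w c' c" then show False using col_strict[OF cc(2), of c' c] cc by simp
    qed
  qed
qed

lemma col_cut_ex: "j < bb \<Longrightarrow> \<exists>c \<in> cuts w. colw w c = j"
proof -
  assume j: "j < bb"
  have "colw w ` cuts w \<subseteq> {..<bb}" using col_lt by auto
  moreover have "card (colw w ` cuts w) = card {..<bb}" using card_image[OF col_inj] unfolding bb_def by simp
  ultimately have "colw w ` cuts w = {..<bb}" by (intro card_subset_eq) auto
  then have "j \<in> colw w ` cuts w" using j by simp
  then show ?thesis by (auto simp: image_iff)
qed

lemma cut_last: "x \<in> set w \<Longrightarrow> c \<in> cuts w \<Longrightarrow> colw w x = colw w c \<Longrightarrow> x = c \<or> before w x c"
proof -
  assume h: "x \<in> set w" "c \<in> cuts w" "colw w x = colw w c"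
  show ?thesis
  proof (rule ccontr)
    assume "\<not> (x = c \<or> before w x c)"
    then have "before w c x" using before_total[OF dist h(1)] cuts_set[OF h(2)] by blast
    then have "colw w c < colw w x" using col_strict[OF h(2), of c x] by simp
    then show False using h(3) by simp
  qed
qed

lemma col_lst: "colw w lst = bb - 1"
proof -
  have "{c \<in> cuts w. before w c lst} = cuts w - {lst}"
    using before_lst cuts_set before_irrefl[OF dist] by auto
  then show ?thesis unfolding colw_def bb_def using lst_cut fin_cuts by simp
qed

lemma SL:
  assumes l: "l \<in> set w" "\<not> rlm w l" and u: "rlm w u" and lu: "before w l u" and c: "colw w l = colw w u"
  shows "u \<in> cuts w \<and> u < l"
proof -
  obtain i k where ik: "i < k" "k < length w" "w!i = l" "w!k = u" using lu unfolding before_def by blast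
  define q where "q = (LEAST q. i < q \<and> q < length w \<and> rlm w (w!q))"
  have ex: "i < k \<and> k < length w \<and> rlm w (w!k)" using ik u by simp
  have q: "i < q" "q < length w" "rlm w (w!q)" using LeastI[of "\<lambda>q. i < q \<and> q < length w \<and> rlm w (w!q)", OF ex]
    unfolding q_def by auto
  have qk: "q \<le> k" using Least_le[of "\<lambda>q. i < q \<and> q < length w \<and> rlm w (w!q)", OF ex] unfolding q_def by simp
  have qmin: "\<not> rlm w (w!r)" if "i < r" "r < q" for r
    using not_less_Least[of r "\<lambda>q. i < q \<and> q < length w \<and> rlm w (w!q)"] that q unfolding q_def by auto
  have pq: "\<not> rlm w (w!(q-1))"
  proof (cases "q - 1 = i")
    case True then show ?thesis using l ik by simp
  next
    case False then show ?thesis using qmin[of "q-1"] q by auto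
  qed
  have cpq: "cutpos w q" unfolding cutpos_def using q pq by auto
  then have qc: "w!q \<in> cuts w" unfolding cuts_def by auto
  have "q = k"
  proof (rule ccontr)
    assume "q \<noteq> k"
    then have "q < k" using qk by simp
    then have "before w (w!q) u" using before_idx[OF dist q(2) ik(2)] ik by simp
    moreover have "before w l (w!q)" using before_idx[OF dist _ q(2), of i] ik q by simp
    ultimately have "colw w l < colw w u" using col_strict[OF qc, of l u] by simp
    then show False using c by simp
  qed
  then have uc: "u \<in> cuts w" using qc ik by simp
  obtain z where z: "before w l z" "z < l" using not_rlm_before[OF dist l] by blast
  have "u < l"
  proof (cases "rlm w z")
    case True
    obtain r where r: "r < length w" "w!r = z" using before_set[OF z(1)] by (auto simp: in_set_conv_nth)
    have "i < r" using z(1) r ik before_idx[OF dist _ r(1), of i] by simp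
    then have "q \<le> r" using qmin[of r] True r by (meson not_le)
    then have "k \<le> r" using \<open>q = k\<close> by simp
    show ?thesis
    proof (cases "k = r")
      case True then show ?thesis using z r ik by simp
    next
      case False
      then have "before w u z" using before_idx[OF dist ik(2) r(1)] \<open>k \<le> r\<close> ik r by simp
      then have "u < z" using rlm_before[OF dist u] by simp
      then show ?thesis using z by simp
    qed
  next
    case False
    then have "l < z" using G321'[OF av dist z(1) l(2)] by simp
    then show ?thesis using z by simp
  qed
  then show ?thesis using uc by simp
qed

lemma tc: "twocol bb Ar Br"
proof
  show "1 \<le> bb" by (rule bb_pos)
  show "finite (Ar j)" for j unfolding Ar_def by auto
  show "finite (Br j)" for j unfolding Br_def by auto
  show "Ar j \<noteq> {}" if j: "j < bb" for j
  proof -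
    obtain c where "c \<in> cuts w" "colw w c = j" using col_cut_ex[OF j] by blast
    then have "c \<in> Ar j" unfolding Ar_def using cuts_set by auto
    then show ?thesis by auto
  qed
  show "Br j \<noteq> {}" if j: "Suc j < bb" for j
  proof -
    obtain c where c: "c \<in> cuts w" "colw w c = j" using col_cut_ex[of j] j by auto
    obtain p where p: "cutpos w p" "c = w!p" using c(1) unfolding cuts_def by auto
    have "c \<noteq> lst" using c col_lst j by auto
    then have "p \<noteq> length w - 1" using p unfolding lst_def by auto
    then have pp: "p < length w" "0 < p" "\<not> rlm w (w!(p-1))" using p unfolding cutpos_def by auto
    let ?z = "w!(p-1)"
    have bz: "before w ?z c" using before_idx[OF dist, of "p-1" p] pp p by simp
    have "colw w ?z \<le> j" using col_mono[OF bz] c by simp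
    moreover have "j \<le> colw w ?z"
    proof -
      have "{c' \<in> cuts w. before w c' c} \<subseteq> {c' \<in> cuts w. before w c' ?z}"
      proof
        fix c' assume "c' \<in> {c' \<in> cuts w. before w c' c}"
        then have c': "c' \<in> cuts w" "before w c' c" by auto
        obtain r where r: "r < length w" "w!r = c'" using cuts_set[OF c'(1)] by (auto simp: in_set_conv_nth)
        have "r < p" using c'(2) r p pp before_idx[OF dist r(1) pp(1)] by simp
        moreover have "r \<noteq> p - 1" using cuts_set[OF c'(1)] r pp by auto
        ultimately have "r < p - 1" by simp
        then have "before w c' ?z" using before_idx[OF dist r(1), of "p-1"] r pp by simp
        then show "c' \<in> {c' \<in> cuts w. before w c' ?z}" using c' by simp
      qed
      moreover have "finite {c' \<in> cuts w. before w c' ?z}" using fin_cuts by simp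
      ultimately show ?thesis using c(2) unfolding colw_def by (metis card_mono)
    qed
    ultimately have "?z \<in> Br j" unfolding Br_def using pp by auto
    then show ?thesis by auto
  qed
  show "x < y" if h: "j < j'" "j' < bb" "x \<in> Ar j" "y \<in> Ar j'" for j j' x y
  proof -
    have x: "x \<in> set w" "rlm w x" "colw w x = j" and y: "y \<in> set w" "colw w y = j'" using h unfolding Ar_def by auto
    have "x \<noteq> y" using x y h by auto
    moreover have "\<not> before w y x" using col_mono[of y x] x y h by auto
    ultimately have "before w x y" using before_total[OF dist x(1) y(1)] by blast
    then show ?thesis using rlm_before[OF dist x(2)] by simp
  qed
  show "x < y" if h: "j < j'" "j' < bb" "x \<in> Br j" "y \<in> Br j'" for j j' x y
  proof -
    have x: "x \<in> set w" "\<not> rlm w x" "colw w x = j" and y: "y \<in> set w" "\<not> rlm w y" "colw w y = j'"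
      using h unfolding Br_def by auto
    have "x \<noteq> y" using x y h by auto
    moreover have "\<not> before w y x" using col_mono[of y x] x y h by auto
    ultimately have "before w x y" using before_total[OF dist x(1) y(1)] by blast
    then show ?thesis using G321'[OF av dist _ x(2) y(2)] by simp
  qed
  show "x < y" if h: "j \<le> j'" "j' < bb" "x \<in> Ar j" "y \<in> Br j'" for j j' x y
  proof -
    have x: "x \<in> set w" "rlm w x" "colw w x = j" and y: "y \<in> set w" "\<not> rlm w y" "colw w y = j'"
      using h unfolding Ar_def Br_def by auto
    have "x \<noteq> y" using x y by auto
    then have "before w x y \<or> before w y x" using before_total[OF dist x(1) y(1)] by blast
    then show ?thesis
    proof
      assume "before w x y" then show ?thesis using rlm_before[OF dist x(2)] by simp
    next
      assume yx: "before w y x"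
      then have "j' \<le> j" using col_mono[OF yx] x y by simp
      then have "colw w y = colw w x" using h x y by simp
      then show ?thesis using SL[OF y(1,2) x(2) yx] by simp
    qed
  qed
  show "Ar j \<inter> Br j' = {}" for j j' unfolding Ar_def Br_def by auto
qed

end

context pw
begin

sublocale tw: twocol bb Ar Br by (rule tc)

lemma a_cut: "j < bb \<Longrightarrow> tw.a j \<in> cuts w \<and> colw w (tw.a j) = j"
proof -
  assume j: "j < bb"
  obtain c where c: "c \<in> cuts w" "colw w c = j" using col_cut_ex[OF j] by blast
  have cA: "c \<in> Ar j" unfolding Ar_def using cuts_set[OF c(1)] c by auto
  have le: "x \<le> c" if x: "x \<in> Ar j" for x
  proof -
    have xx: "x \<in> set w" "rlm w x" "colw w x = j" using x unfolding Ar_def by auto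
    have "x = c \<or> before w x c" using cut_last[OF xx(1) c(1)] xx c by simp
    then show ?thesis using rlm_before[OF dist xx(2)] by fastforce
  qed
  have "tw.a j = c" unfolding tw.a_def
    by (rule Max_eqI[OF tw.finA]) (use le cA in auto)
  then show ?thesis using c by simp
qed

lemma set_eq: "set tw.w = set w"
proof -
  have "(\<Union>j<bb. Ar j \<union> Br j) = set w"
  proof
    show "(\<Union>j<bb. Ar j \<union> Br j) \<subseteq> set w" unfolding Ar_def Br_def by auto
    show "set w \<subseteq> (\<Union>j<bb. Ar j \<union> Br j)"
    proof
      fix x assume x: "x \<in> set w"
      have "colw w x < bb" by (rule col_lt)
      moreover have "x \<in> Ar (colw w x) \<union> Br (colw w x)" unfolding Ar_def Br_def using x by auto
      ultimately show "x \<in> (\<Union>j<bb. Ar j \<union> Br j)" by blast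
    qed
  qed
  then show ?thesis using tw.set_w by simp
qed

lemma w_eq: "tw.w = w"
proof -
  have "w = tw.w"
  proof (rule distinct_eq_by_before[OF dist tw.w_distinct set_eq[symmetric]])
    fix x y assume bxy: "before w x y"
    have xs: "x \<in> set w" and ys: "y \<in> set w" using before_set[OF bxy] by auto
    define j where "j = colw w x"
    define j' where "j' = colw w y"
    have jb: "j < bb" "j' < bb" unfolding j_def j'_def by (rule col_lt)+
    have xin: "x \<in> Ar j \<union> Br j" unfolding Ar_def Br_def j_def using xs by auto
    have yin: "y \<in> Ar j' \<union> Br j'" unfolding Ar_def Br_def j'_def using ys by auto
    have jj: "j \<le> j'" unfolding j_def j'_def using col_mono[OF bxy] .
    have KO: "before tw.w x y \<longleftrightarrow> j < j' \<or> (j = j' \<and> before (tw.blk j) x y)"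
      by (rule tw.KO[OF jb xin yin])
    show "before tw.w x y"
    proof (cases "j < j'")
      case True then show ?thesis using KO by simp
    next
      case False
      then have jeq: "j' = j" using jj by simp
      define c where "c = tw.a j"
      have c: "c \<in> cuts w" "colw w c = j" using a_cut[OF jb(1)] unfolding c_def by auto
      have xy: "x \<noteq> y" using bxy before_irrefl[OF dist] by auto
      have "before (tw.blk j) x y"
        unfolding tw.before_blk[OF jb(1)] c_def[symmetric]
      proof (cases "y = c")
        case True
        then show "(x \<in> Ar j - {c} \<and> y \<in> Ar j - {c} \<and> x < y) \<or> (x \<in> Ar j - {c} \<and> y \<in> Br j) \<or>
          (x \<in> (Ar j - {c}) \<union> Br j \<and> y = c) \<or> (x \<in> Br j \<and> y \<in> Br j \<and> x < y)"
          using xin xy by auto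
      next
        case yc: False
        have xc: "x \<noteq> c"
        proof
          assume "x = c"
          have "colw w y = colw w c" using c jeq unfolding j'_def by simp
          then have "y = c \<or> before w y c" using cut_last[OF ys c(1)] by simp
          then show False using yc bxy \<open>x = c\<close> before_asym[OF dist] by blast
        qed
        have yin': "y \<in> Ar j \<union> Br j" using yin jeq by simp
        show "(x \<in> Ar j - {c} \<and> y \<in> Ar j - {c} \<and> x < y) \<or> (x \<in> Ar j - {c} \<and> y \<in> Br j) \<or>
          (x \<in> (Ar j - {c}) \<union> Br j \<and> y = c) \<or> (x \<in> Br j \<and> y \<in> Br j \<and> x < y)"
        proof (cases "y \<in> Ar j")
          case yA: True
          then have yr: "rlm w y" unfolding Ar_def by auto
          show ?thesis
          proof (cases "x \<in> Ar j")
            case True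
            then have "rlm w x" unfolding Ar_def by auto
            then have "x < y" using rlm_before[OF dist _ bxy] by simp
            then show ?thesis using True yA xc yc by auto
          next
            case False
            then have xB: "x \<in> Br j" using xin by simp
            then have xr: "\<not> rlm w x" "colw w x = j" unfolding Br_def by auto
            have "colw w y = j" using yA unfolding Ar_def by auto
            then have "y \<in> cuts w" using SL[OF xs xr(1) yr bxy] xr by simp
            then have "y = c" using inj_onD[OF col_inj _ \<open>y \<in> cuts w\<close> c(1)] c \<open>colw w y = j\<close> by simp
            then show ?thesis using yc by simp
          qed
        next
          case False
          then have yB: "y \<in> Br j" using yin' by simp
          show ?thesis
          proof (cases "x \<in> Ar j")
            case True
            then show ?thesis using yB xc by auto
          next
            case False
            then have xB: "x \<in> Br j" using xin by simp
            have "x < y" using G321'[OF av dist bxy] xB yB unfolding Br_def by auto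
            then show ?thesis using xB yB by auto
          qed
        qed
      qed
      then show ?thesis using KO jeq by simp
    qed
  qed
  then show ?thesis by simp
qed


lemma recon_eq: "recon n w = (bb, tw.Tp n)"
  unfolding recon_def tw.Tp_def unfolding Ar_def Br_def bb_def by simp

lemma alpha_recon:
  assumes nw: "n \<notin> set w"
  shows "alpha_word n bb (tw.Tp n) = w"
proof -
  have "alpha_word n bb (tw.Tp n) = tw.w"
    unfolding alpha_word_def tw.w_def
  proof (rule arg_cong[where f = concat], rule map_cong[OF refl])
    fix j assume "j \<in> set [0..<bb]"
    then have j: "j < bb" by simp
    have nB: "n \<notin> Br j" using nw unfolding Br_def by auto
    have t0: "tw.Tp n 0 j = Ar j" unfolding tw.Tp_def using j by simp
    have t1: "(if j = bb - 1 then tw.Tp n 1 j - {n} else tw.Tp n 1 j) = Br j"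
      unfolding tw.Tp_def using j nB by auto
    show "(let A = tw.Tp n 0 j; B = if j = bb - 1 then tw.Tp n 1 j - {n} else tw.Tp n 1 j
          in sorted_list_of_set (A - {Max A}) @ sorted_list_of_set B @ [Max A]) = tw.blk j"
      unfolding t0 t1 tw.blk_def tw.a_def Let_def by simp
  qed
  then show ?thesis using w_eq by simp
qed

lemma recon_mem:
  assumes U: "set w = {1..n-1}" and n2: "2 \<le> n"
  shows "recon n w \<in> SYT_two_rows n"
proof -
  have "(\<Union>j<bb. Ar j \<union> Br j) = {1..n-1}" using tw.set_w set_eq U by simp
  then show ?thesis using recon_eq tw.pack n2 by simp
qed

lemma alpha_of_recon:
  assumes U: "set w = {1..n-1}" and n2: "2 \<le> n"
  shows "(\<lambda>(b, T). alpha_word n b T) (recon n w) = w"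
proof -
  have "n \<notin> set w" using U by auto
  then show ?thesis using recon_eq alpha_recon by simp
qed

end

theorem theorem7:
  fixes n :: nat
  assumes "n \<ge> 2"
  shows "bij_betw (\<lambda>(b, T). alpha_word n b T) (SYT_two_rows n) (perms321 (n - 1))
    \<and> (\<forall>(b, T) \<in> SYT_two_rows n. (\<Union>j<b. T 0 j) = rl_min_values (alpha_word n b T))
    \<and> (\<forall>(b, T) \<in> SYT_two_rows n. inner_valleys (alpha_word n b T) = b - 1)"
proof (intro conjI)
  show "bij_betw (\<lambda>(b, T). alpha_word n b T) (SYT_two_rows n) (perms321 (n - 1))"
  proof (rule bij_betw_byWitness[where f' = "recon n"])
    show "\<forall>a\<in>SYT_two_rows n. recon n ((\<lambda>(b, T). alpha_word n b T) a) = a"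
    proof
      fix bT assume h: "bT \<in> SYT_two_rows n"
      obtain b T where bT: "bT = (b, T)" by (cases bT)
      interpret tab n b T using h bT by unfold_locales simp
      show "recon n ((\<lambda>(b, T). alpha_word n b T) bT) = bT" using bT alpha_eq recon_alpha by simp
    qed
    show "\<forall>a'\<in>perms321 (n - 1). (\<lambda>(b, T). alpha_word n b T) (recon n a') = a'"
    proof
      fix w assume h: "w \<in> perms321 (n - 1)"
      then have w: "distinct w" "set w = {1..n-1}" "avoids321 w" unfolding perms321_def by auto
      have "w \<noteq> []" using w(2) assms by auto
      then interpret pw w using w by unfold_locales auto
      show "(\<lambda>(b, T). alpha_word n b T) (recon n w) = w" using alpha_of_recon[OF w(2) assms] .
    qed
    show "(\<lambda>(b, T). alpha_word n b T) ` SYT_two_rows n \<subseteq> perms321 (n - 1)"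
    proof
      fix x assume "x \<in> (\<lambda>(b, T). alpha_word n b T) ` SYT_two_rows n"
      then obtain b T where h: "(b, T) \<in> SYT_two_rows n" "x = alpha_word n b T" by auto
      interpret tab n b T using h by unfold_locales simp
      show "x \<in> perms321 (n - 1)" using h alpha_eq perm by simp
    qed
    show "recon n ` perms321 (n - 1) \<subseteq> SYT_two_rows n"
    proof
      fix x assume "x \<in> recon n ` perms321 (n - 1)"
      then obtain w where h: "w \<in> perms321 (n - 1)" "x = recon n w" by auto
      then have w: "distinct w" "set w = {1..n-1}" "avoids321 w" unfolding perms321_def by auto
      have "w \<noteq> []" using w(2) assms by auto
      then interpret pw w using w by unfold_locales auto
      show "x \<in> SYT_two_rows n" using recon_mem[OF w(2) assms] h by simp
    qed
  qed
  show "\<forall>(b, T) \<in> SYT_two_rows n. (\<Union>j<b. T 0 j) = rl_min_values (alpha_word n b T)"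
  proof (intro ballI, clarify)
    fix b T assume h: "(b, T) \<in> SYT_two_rows n"
    interpret tab n b T using h by unfold_locales simp
    show "(\<Union>j<b. T 0 j) = rl_min_values (alpha_word n b T)" using rlmin alpha_eq by simp
  qed
  show "\<forall>(b, T) \<in> SYT_two_rows n. inner_valleys (alpha_word n b T) = b - 1"
  proof (intro ballI, clarify)
    fix b T assume h: "(b, T) \<in> SYT_two_rows n"
    interpret tab n b T using h by unfold_locales simp
    show "inner_valleys (alpha_word n b T) = b - 1" using tc.w_valleys alpha_eq by simp
  qed
qed

end
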